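(* Let $\alpha>0$, $\alpha\neq1$. For every unitary $U\in\mathcal{U}(d)$ and all Clifford unitaries $C_1,C_2\in\mathcal{C}_n(d_L)$, $H_\alpha(C_1UC_2)=H_\alpha(U)$.
   Context: Let $d_L\ge 2$, $n\ge1$, $d=d_L^n$. On $\mathbb{C}^{d_L}$ with computational basis $\{|k\rangle\}_{k\in\mathbb{Z}_{d_L}}$, let $Z|k\rangle=\omega^k|k\rangle$, $X|k\rangle=|k+1\rangle$ (mod $d_L$), $\omega=e^{2\pi i/d_L}$, $\tau=-e^{i\pi/d_L}$, $D_{(a_1,a_2)}=\tau^{a_1a_2}X^{a_1}Z^{a_2}$, and for $\mathbf a=\mathbf a_1\oplus\cdots\oplus\mathbf a_n\in\mathbb{Z}_{d_L}^{2n}$ let $D_{\mathbf a}=D_{\mathbf a_1}\otimes\cdots\otimes D_{\mathbf a_n}$ acting on $\mathbb{C}^d$. The Clifford group $\mathcal{C}_n(d_L)$ is the set of unitaries $C$ on $\mathbb{C}^d$ such that for every $\mathbf a$ there exist $s\in\mathbb{Z}_{d_L}$ and $\mathbf a'$ with $CD_{\mathbf a}C^\dagger=\omega^sD_{\mathbf a'}$. For a unitary $U$ let $\mathfrak{C}_{\mathbf{ab}}(U)=\frac1d\operatorname{tr}(D_{\mathbf a}^\dagger UD_{\mathbf b}U^\dagger)$, $\mathfrak{D}_{\mathbf{ab}}(U)=|\mathfrak{C}_{\mathbf{ab}}(U)|^2$, and $H_\alpha(U)=\frac{1}{\alpha-1}\Big(1-\frac{1}{d^2}\sum_{\mathbf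 a,\mathbf b}\mathfrak{D}_{\mathbf{ab}}(U)^\alpha\Big)$. *)

theory Defs
  imports Complex_Main "Jordan_Normal_Form.Matrix"
begin

definition adj :: "complex mat \<Rightarrow> complex mat" where
  "adj A = mat (dim_col A) (dim_row A) (\<lambda>(i,j). cnj (A $$ (j,i)))"

definition mtrace :: "complex mat \<Rightarrow> complex" where
  "mtrace A = (\<Sum>i<dim_row A. A $$ (i,i))"

definition unitaries :: "nat \<Rightarrow> complex mat set" where
  "unitaries d = {U. U \<in> carrier_mat d d \<and> U * adj U = 1\<^sub>m d \<and> adj U * U = 1\<^sub>m d}"

definition kron :: "complex mat \<Rightarrow> complex mat \<Rightarrow> complex mat" where
  "kron A B = mat (dim_row A * dim_row B) (dim_col A * dim_col B)
     (\<lambda>(i,j). A $$ (i div dim_row B, j div dim_col B) * B $$ (i mod dim_row B, j mod dim_col B))"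

definition omega :: "nat \<Rightarrow> complex" where
  "omega dL = exp (2 * pi * \<i> / of_nat dL)"

definition tau :: "nat \<Rightarrow> complex" where
  "tau dL = - exp (pi * \<i> / of_nat dL)"

definition Zop :: "nat \<Rightarrow> complex mat" where
  "Zop dL = mat dL dL (\<lambda>(i,j). if i = j then omega dL ^ j else 0)"

definition Xop :: "nat \<Rightarrow> complex mat" where
  "Xop dL = mat dL dL (\<lambda>(i,j). if i = (j + 1) mod dL then 1 else 0)"

definition D1 :: "nat \<Rightarrow> nat \<times> nat \<Rightarrow> complex mat" where
  "D1 dL a = tau dL ^ (fst a * snd a) \<cdot>\<^sub>m (Xop dL ^\<^sub>m fst a * Zop dL ^\<^sub>m snd a)"

fun Dn :: "nat \<Rightarrow> (nat \<times> nat) list \<Rightarrow> complex mat" where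
  "Dn dL [] = 1\<^sub>m 1"
| "Dn dL (p # ps) = kron (D1 dL p) (Dn dL ps)"

definition Pidx :: "nat \<Rightarrow> nat \<Rightarrow> (nat \<times> nat) list set" where
  "Pidx dL n = {a. length a = n \<and> set a \<subseteq> {..<dL} \<times> {..<dL}}"

definition Clifford :: "nat \<Rightarrow> nat \<Rightarrow> complex mat set" where
  "Clifford dL n = {C. C \<in> unitaries (dL ^ n) \<and>
     (\<forall>a \<in> Pidx dL n. \<exists>s::nat. \<exists>a' \<in> Pidx dL n.
        C * Dn dL a * adj C = omega dL ^ s \<cdot>\<^sub>m Dn dL a')}"

definition frakC :: "nat \<Rightarrow> nat \<Rightarrow> (nat \<times> nat) list \<Rightarrow> (nat \<times> nat) list \<Rightarrow> complex mat \<Rightarrow> complex" where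
  "frakC dL n a b U = mtrace (adj (Dn dL a) * U * Dn dL b * adj U) / of_nat (dL ^ n)"

definition frakD :: "nat \<Rightarrow> nat \<Rightarrow> (nat \<times> nat) list \<Rightarrow> (nat \<times> nat) list \<Rightarrow> complex mat \<Rightarrow> real" where
  "frakD dL n a b U = (cmod (frakC dL n a b U))\<^sup>2"

definition Halpha :: "nat \<Rightarrow> nat \<Rightarrow> real \<Rightarrow> complex mat \<Rightarrow> real" where
  "Halpha dL n \<alpha> U = (1 / (\<alpha> - 1)) *
     (1 - (1 / (real (dL ^ n))\<^sup>2) * (\<Sum>a \<in> Pidx dL n. \<Sum>b \<in> Pidx dL n. (frakD dL n a b U) powr \<alpha>))"

end

theory Submission
  imports Defs "HOL-Analysis.Complex_Transcendental" "HOL-Number_Theory.Cong"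
begin

lemma sum_mult_split:
  fixes g :: "nat \<Rightarrow> 'a::comm_monoid_add"
  shows "(\<Sum>k<m*n. g k) = (\<Sum>a<m. \<Sum>b<n. g (a*n+b))"
proof -
  have bij: "bij_betw (\<lambda>(a,b). a*n+b) ({..<m}\<times>{..<n}) {..<m*n}"
  proof (rule bij_betw_imageI)
    show "inj_on (\<lambda>(a,b). a*n+b) ({..<m}\<times>{..<n})"
    proof (rule inj_onI, clarsimp)
      fix a b a' b' assume "b < n" "b' < n" "a*n+b = a'*n+b'"
      then have "(a*n+b) div n = (a'*n+b') div n" "(a*n+b) mod n = (a'*n+b') mod n" by simp_all
      then show "a = a' \<and> b = b'" using \<open>b<n\<close> \<open>b'<n\<close> by simp
    qed
    show "(\<lambda>(a,b). a*n+b) ` ({..<m}\<times>{..<n}) = {..<m*n}"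
    proof
      show "(\<lambda>(a,b). a*n+b) ` ({..<m}\<times>{..<n}) \<subseteq> {..<m*n}"
      proof clarsimp
        fix a b assume "a<m" "b<n"
        then have "a*n+b < a*n+n" by simp
        also have "... = (a+1)*n" by simp
        also have "... \<le> m*n" using \<open>a<m\<close> by (intro mult_right_mono) auto
        finally show "a*n+b < m*n" .
      qed
      show "{..<m*n} \<subseteq> (\<lambda>(a,b). a*n+b) ` ({..<m}\<times>{..<n})"
      proof
        fix k assume k: "k \<in> {..<m*n}"
        then have n0: "n > 0" by (cases "n=0") auto
        have "k div n < m" using k by (simp add: less_mult_imp_div_less)
        moreover have "k mod n < n" using n0 by simp
        moreover have "k = (k div n)*n + k mod n" by simp
        ultimately show "k \<in> (\<lambda>(a,b). a*n+b) ` ({..<m}\<times>{..<n})" by force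
      qed
    qed
  qed
  have "(\<Sum>k<m*n. g k) = (\<Sum>x\<in>{..<m}\<times>{..<n}. g ((\<lambda>(a,b). a*n+b) x))"
    using sum.reindex_bij_betw[OF bij, of g] by simp
  also have "... = (\<Sum>a<m. \<Sum>b<n. g (a*n+b))"
    by (simp add: sum.cartesian_product split_def)
  finally show ?thesis .
qed

definition frob :: "complex mat \<Rightarrow> complex mat \<Rightarrow> complex" where
  "frob A B = (\<Sum>i<dim_row A. \<Sum>j<dim_col A. cnj (A $$ (i,j)) * B $$ (i,j))"

lemma kron_dims[simp]: "dim_row (kron A B) = dim_row A * dim_row B"
  "dim_col (kron A B) = dim_col A * dim_col B"
  by (simp_all add: kron_def)

lemma kron_index:
  assumes "i1 < dim_row A" "j1 < dim_col A" "i2 < dim_row B" "j2 < dim_col B"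
  shows "kron A B $$ (i1 * dim_row B + i2, j1 * dim_col B + j2) = A $$ (i1,j1) * B $$ (i2,j2)"
proof -
  have a: "i1 * dim_row B + i2 < dim_row A * dim_row B"
  proof -
    have "i1 * dim_row B + i2 < (i1+1) * dim_row B" using assms by simp
    also have "... \<le> dim_row A * dim_row B" using assms by (intro mult_right_mono) auto
    finally show ?thesis .
  qed
  have b: "j1 * dim_col B + j2 < dim_col A * dim_col B"
  proof -
    have "j1 * dim_col B + j2 < (j1+1) * dim_col B" using assms by simp
    also have "... \<le> dim_col A * dim_col B" using assms by (intro mult_right_mono) auto
    finally show ?thesis .
  qed
  have c: "(i1 * dim_row B + i2) div dim_row B = i1" "(i1 * dim_row B + i2) mod dim_row B = i2"
    "(j1 * dim_col B + j2) div dim_col B = j1" "(j1 * dim_col B + j2) mod dim_col B = j2"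
    using assms by simp_all
  have "kron A B $$ (i1 * dim_row B + i2, j1 * dim_col B + j2) =
     A $$ ((i1 * dim_row B + i2) div dim_row B, (j1 * dim_col B + j2) div dim_col B) *
     B $$ ((i1 * dim_row B + i2) mod dim_row B, (j1 * dim_col B + j2) mod dim_col B)"
    unfolding kron_def using a b by (subst index_mat) auto
  then show ?thesis unfolding c .
qed

lemma frob_kron:
  assumes A: "A \<in> carrier_mat ra ca" "A' \<in> carrier_mat ra ca"
    and B: "B \<in> carrier_mat rb cb" "B' \<in> carrier_mat rb cb"
  shows "frob (kron A B) (kron A' B') = frob A A' * frob B B'"
proof -
  define F where "F = (\<lambda>i j. cnj (kron A B $$ (i, j)) * kron A' B' $$ (i, j))"
  have "frob (kron A B) (kron A' B') = (\<Sum>i<ra*rb. \<Sum>j<ca*cb. F i j)"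
    using A B unfolding frob_def F_def by (simp add: carrier_matD)
  also have "... = (\<Sum>i1<ra. \<Sum>i2<rb. \<Sum>j<ca*cb. F (i1*rb+i2) j)"
    by (rule sum_mult_split)
  also have "... = (\<Sum>i1<ra. \<Sum>i2<rb. \<Sum>j1<ca. \<Sum>j2<cb. F (i1*rb+i2) (j1*cb+j2))"
    by (rule sum.cong[OF refl], rule sum.cong[OF refl], rule sum_mult_split)
  also have "... = (\<Sum>i1<ra. \<Sum>i2<rb. \<Sum>j1<ca. \<Sum>j2<cb.
        (cnj (A $$ (i1,j1)) * A' $$ (i1,j1)) * (cnj (B $$ (i2,j2)) * B' $$ (i2,j2)))"
  proof (intro sum.cong refl)
    fix i1 i2 j1 j2 assume "i1 \<in> {..<ra}" "i2 \<in> {..<rb}" "j1 \<in> {..<ca}" "j2 \<in> {..<cb}"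
    then show "F (i1*rb+i2) (j1*cb+j2) = (cnj (A $$ (i1,j1)) * A' $$ (i1,j1)) * (cnj (B $$ (i2,j2)) * B' $$ (i2,j2))"
      using kron_index[of i1 A j1 i2 B j2] kron_index[of i1 A' j1 i2 B' j2] A B
      unfolding F_def by (simp add: carrier_matD)
  qed
  also have "... = (\<Sum>i1<ra. \<Sum>j1<ca. \<Sum>i2<rb. \<Sum>j2<cb.
        (cnj (A $$ (i1,j1)) * A' $$ (i1,j1)) * (cnj (B $$ (i2,j2)) * B' $$ (i2,j2)))"
    by (rule sum.cong[OF refl], rule sum.swap)
  also have "... = (\<Sum>i1<ra. \<Sum>j1<ca. (cnj (A $$ (i1,j1)) * A' $$ (i1,j1)) * frob B B')"
    using B by (simp add: frob_def sum_distrib_left carrier_matD)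
  also have "... = frob A A' * frob B B'"
    using A by (simp add: frob_def sum_distrib_right carrier_matD)
  finally show ?thesis .
qed

lemma Xop_carrier[simp]: "Xop dL \<in> carrier_mat dL dL"
  unfolding Xop_def by (rule mat_carrier)

lemma Zop_carrier[simp]: "Zop dL \<in> carrier_mat dL dL"
  unfolding Zop_def by (rule mat_carrier)

lemma XZ_dims[simp]: "dim_row (Xop dL) = dL" "dim_col (Xop dL) = dL"
  "dim_row (Zop dL) = dL" "dim_col (Zop dL) = dL"
  by (simp_all add: Xop_def Zop_def)

lemma D1_carrier: "D1 dL p \<in> carrier_mat dL dL"
proof -
  have "Xop dL ^\<^sub>m fst p \<in> carrier_mat dL dL" "Zop dL ^\<^sub>m snd p \<in> carrier_mat dL dL" by simp_all
  then have "Xop dL ^\<^sub>m fst p * Zop dL ^\<^sub>m snd p \<in> carrier_mat dL dL" by (rule mult_carrier_mat)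
  then show ?thesis unfolding D1_def by (rule smult_carrier_mat)
qed

lemma Dn_carrier: "Dn dL a \<in> carrier_mat (dL ^ length a) (dL ^ length a)"
proof (induction a)
  case Nil
  show ?case by simp
next
  case (Cons p ps)
  have d: "dim_row (D1 dL p) = dL" "dim_col (D1 dL p) = dL" using D1_carrier[of dL p] by auto
  have e: "dim_row (Dn dL ps) = dL ^ length ps" "dim_col (Dn dL ps) = dL ^ length ps"
    using Cons.IH by auto
  show ?case unfolding carrier_mat_def Dn.simps kron_dims by (simp add: d e)
qed

lemma Xpow_entry:
  assumes "i < dL" "j < dL"
  shows "(Xop dL ^\<^sub>m a) $$ (i,j) = (if i = (j+a) mod dL then 1 else 0)"
  using assms
proof (induction a arbitrary: i j)
  case 0
  have "dim_row (Xop dL) = dL" by (simp add: Xop_def)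
  then show ?case using 0 by simp
next
  case (Suc a)
  have dX: "dim_row (Xop dL) = dL" "dim_col (Xop dL) = dL" by (simp_all add: Xop_def)
  have "(Xop dL ^\<^sub>m Suc a) $$ (i,j) = (\<Sum>k\<in>{0..<dL}. (Xop dL ^\<^sub>m a) $$ (i,k) * Xop dL $$ (k,j))"
    using Suc.prems dX by (simp add: scalar_prod_def)
  also have "... = (\<Sum>k\<in>{0..<dL}. if k = (j+1) mod dL then (if i = (k+a) mod dL then 1 else 0) else 0)"
    by (rule sum.cong[OF refl]) (use Suc in \<open>auto simp: Xop_def\<close>)
  also have "... = (if i = ((j+1) mod dL + a) mod dL then 1 else 0)"
    using Suc.prems by (simp add: sum.delta)
  also have "((j+1) mod dL + a) mod dL = (j + Suc a) mod dL" by (simp add: mod_add_left_eq)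
  finally show ?case .
qed

lemma Zpow_entry:
  assumes "i < dL" "j < dL"
  shows "(Zop dL ^\<^sub>m b) $$ (i,j) = (if i = j then omega dL ^ (b*j) else 0)"
  using assms
proof (induction b arbitrary: i j)
  case 0
  have "dim_row (Zop dL) = dL" by (simp add: Zop_def)
  then show ?case using 0 by simp
next
  case (Suc b)
  have dZ: "dim_row (Zop dL) = dL" "dim_col (Zop dL) = dL" by (simp_all add: Zop_def)
  have "(Zop dL ^\<^sub>m Suc b) $$ (i,j) = (\<Sum>k\<in>{0..<dL}. (Zop dL ^\<^sub>m b) $$ (i,k) * Zop dL $$ (k,j))"
    using Suc.prems dZ by (simp add: scalar_prod_def)
  also have "... = (\<Sum>k\<in>{0..<dL}. if k = j then (if i = k then omega dL ^ (b*k) * omega dL ^ j else 0) else 0)"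
    by (rule sum.cong[OF refl]) (use Suc in \<open>auto simp: Zop_def\<close>)
  also have "... = (if i = j then omega dL ^ (Suc b * j) else 0)"
    using Suc.prems by (simp add: sum.delta power_add)
  finally show ?case .
qed

lemma D1_entry:
  assumes "i < dL" "j < dL"
  shows "D1 dL (a,b) $$ (i,j) = (if i = (j+a) mod dL then tau dL ^ (a*b) * omega dL ^ (b*j) else 0)"
proof -
  have dX: "Xop dL ^\<^sub>m a \<in> carrier_mat dL dL" "Zop dL ^\<^sub>m b \<in> carrier_mat dL dL" by simp_all
  have "(Xop dL ^\<^sub>m a * Zop dL ^\<^sub>m b) $$ (i,j) = (\<Sum>k\<in>{0..<dL}. (Xop dL ^\<^sub>m a) $$ (i,k) * (Zop dL ^\<^sub>m b) $$ (k,j))"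
    using assms dX by (simp add: scalar_prod_def carrier_matD)
  also have "... = (\<Sum>k\<in>{0..<dL}. if k = j then (if i = (k+a) mod dL then 1 else 0) * omega dL ^ (b*k) else 0)"
    by (rule sum.cong[OF refl]) (use assms in \<open>auto simp: Xpow_entry Zpow_entry\<close>)
  also have "... = (if i = (j+a) mod dL then omega dL ^ (b*j) else 0)"
    using assms by (simp add: sum.delta)
  finally have e: "(Xop dL ^\<^sub>m a * Zop dL ^\<^sub>m b) $$ (i,j) = (if i = (j+a) mod dL then omega dL ^ (b*j) else 0)" .
  have "D1 dL (a,b) $$ (i,j) = tau dL ^ (a*b) * (Xop dL ^\<^sub>m a * Zop dL ^\<^sub>m b) $$ (i,j)"
    unfolding D1_def using assms dX by (simp add: carrier_matD)
  then show ?thesis using e by simp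
qed

lemma cnj_exp_i:
  assumes "Re z = 0"
  shows "cnj (exp z) * exp z = 1"
proof -
  have "cnj (exp z) * exp z = exp (cnj z + z)" by (simp add: exp_cnj exp_add)
  also have "cnj z + z = 0" using assms by (simp add: complex_eq_iff)
  finally show ?thesis by simp
qed

lemma omega_unit: "cnj (omega dL) * omega dL = 1"
  unfolding omega_def by (rule cnj_exp_i) simp

lemma tau_unit: "cnj (tau dL) * tau dL = 1"
  unfolding tau_def using cnj_exp_i[of "pi * \<i> / of_nat dL"] by simp

lemma unit_pow: "cnj (x::complex) * x = 1 \<Longrightarrow> cnj (x ^ k) * x ^ k = 1"
  by (metis complex_cnj_power power_mult_distrib power_one)

lemma omega_nz: "omega dL \<noteq> 0"
  unfolding omega_def by simp

lemma omega_pow_dL: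
  assumes "dL > 0" shows "omega dL ^ dL = 1"
proof -
  have "omega dL ^ dL = exp (of_nat dL * (2 * pi * \<i> / of_nat dL))"
    unfolding omega_def by (rule exp_of_nat_mult[symmetric])
  also have "of_nat dL * (2 * pi * \<i> / of_nat dL) = 2 * pi * \<i>" using assms by simp
  finally show ?thesis by simp
qed

lemma omega_pow_ne1:
  assumes "0 < k" "k < dL" shows "omega dL ^ k \<noteq> 1"
proof
  assume h: "omega dL ^ k = 1"
  have "omega dL ^ k = exp (of_nat k * (2 * pi * \<i> / of_nat dL))"
    unfolding omega_def by (rule exp_of_nat_mult[symmetric])
  with h have "exp (of_nat k * (2 * pi * \<i> / of_nat dL)) = 1" by simp
  then have "\<exists>m::int. Im (of_nat k * (2 * pi * \<i> / of_nat dL)) = of_int (2 * m) * pi"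
    unfolding exp_eq_1 by blast
  then obtain m :: int where m: "Im (of_nat k * (2 * pi * \<i> / of_nat dL)) = of_int (2 * m) * pi" by blast
  have "real k * (2 * pi) / real dL = of_int (2 * m) * pi" using m by simp
  then have "real k = real_of_int m * real dL" using assms pi_gt_zero
    by (simp add: field_simps)
  then have km: "int k = m * int dL" by (metis of_int_eq_iff of_int_mult of_int_of_nat_eq)
  have "0 < m * int dL" using km assms by simp
  then have "m > 0" using assms by (simp add: zero_less_mult_iff)
  then have "int k \<ge> int dL" using km assms by simp
  then show False using assms by simp
qed

lemma omega_pow_inj:
  assumes "p < dL" "q < dL" "omega dL ^ p = omega dL ^ q" shows "p = q"
proof (rule ccontr)
  assume ne: "p \<noteq> q"
  have *: "\<And>p q. p < q \<Longrightarrow> q < dL \<Longrightarrow> omega dL ^ p = omega dL ^ q \<Longrightarrow> False"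
  proof -
    fix p q assume "p < q" "q < dL" "omega dL ^ p = omega dL ^ q"
    have "omega dL ^ p * omega dL ^ (q - p) = omega dL ^ q"
      using \<open>p < q\<close> by (simp add: power_add[symmetric])
    then have "omega dL ^ p * 1 = omega dL ^ p * omega dL ^ (q - p)"
      using \<open>omega dL ^ p = omega dL ^ q\<close> by simp
    then have "omega dL ^ (q - p) = 1" using omega_nz by (metis mult_left_cancel power_not_zero)
    then show False using omega_pow_ne1[of "q - p" dL] \<open>p < q\<close> \<open>q < dL\<close> by simp
  qed
  show False
  proof (cases "p < q")
    case True then show False using * assms by blast
  next
    case False then have "q < p" using ne by simp
    then show False using * assms by metis
  qed
qed

lemma frob_D1:
  assumes "dL > 0" "a < dL" "b < dL" "c < dL" "e < dL"
  shows "frob (D1 dL (a,b)) (D1 dL (c,e)) = (if (a,b) = (c,e) then of_nat dL else 0)"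
proof -
  define T where "T = (\<lambda>j. cnj (tau dL ^ (a*b) * omega dL ^ (b*j)) * (tau dL ^ (c*e) * omega dL ^ (e*j)))"
  have "frob (D1 dL (a,b)) (D1 dL (c,e)) = (\<Sum>i<dL. \<Sum>j<dL. cnj (D1 dL (a,b) $$ (i,j)) * D1 dL (c,e) $$ (i,j))"
    unfolding frob_def using D1_carrier[of dL "(a,b)"] by (simp add: carrier_matD)
  also have "... = (\<Sum>i<dL. \<Sum>j<dL. if i = (j+a) mod dL then (if i = (j+c) mod dL then T j else 0) else 0)"
    by (intro sum.cong refl) (simp add: D1_entry T_def)
  also have "... = (\<Sum>j<dL. \<Sum>i<dL. if i = (j+a) mod dL then (if i = (j+c) mod dL then T j else 0) else 0)"
    by (rule sum.swap)
  also have "... = (\<Sum>j<dL. if (j+a) mod dL = (j+c) mod dL then T j else 0)"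
    using assms by (intro sum.cong refl) (simp add: sum.delta)
  finally have F: "frob (D1 dL (a,b)) (D1 dL (c,e)) = (\<Sum>j<dL. if (j+a) mod dL = (j+c) mod dL then T j else 0)" .
  show ?thesis
  proof (cases "a = c")
    case False
    have "\<And>j. (j+a) mod dL \<noteq> (j+c) mod dL"
    proof
      fix j assume "(j+a) mod dL = (j+c) mod dL"
      then have "[j+a = j+c] (mod dL)" by (simp add: cong_def)
      then have "[a = c] (mod dL)" by (simp add: cong_add_lcancel_nat)
      then show False using False assms by (simp add: cong_def)
    qed
    then show ?thesis using F False by simp
  next
    case True
    have TT: "T j = (cnj (tau dL ^ (a*b)) * tau dL ^ (a*e)) * (cnj (omega dL ^ b) * omega dL ^ e) ^ j" for j
      unfolding T_def True by (simp add: power_mult power_mult_distrib mult_ac)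
    have F2: "frob (D1 dL (a,b)) (D1 dL (c,e)) = (\<Sum>j<dL. T j)" using F True by simp
    show ?thesis
    proof (cases "b = e")
      case True
      have "T j = 1" for j unfolding TT using \<open>b = e\<close> unit_pow[OF tau_unit] unit_pow[OF omega_unit] by simp
      then show ?thesis using F2 True \<open>a = c\<close> by simp
    next
      case False
      define r where "r = cnj (omega dL ^ b) * omega dL ^ e"
      have r1: "r \<noteq> 1"
      proof
        assume "r = 1"
        have u: "cnj (omega dL ^ b) * omega dL ^ b = 1" by (rule unit_pow[OF omega_unit])
        have "omega dL ^ e = (cnj (omega dL ^ b) * omega dL ^ b) * omega dL ^ e" by (simp only: u mult_1_left)
        also have "... = omega dL ^ b * (cnj (omega dL ^ b) * omega dL ^ e)" by (simp only: mult_ac)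
        also have "... = omega dL ^ b" using \<open>r = 1\<close> unfolding r_def by (simp only: mult_1_right)
        finally have "omega dL ^ e = omega dL ^ b" .
        then show False using omega_pow_inj[of e dL b] False assms by simp
      qed
      have p1: "(omega dL ^ b) ^ dL = 1"
        by (metis power_mult mult.commute omega_pow_dL[OF assms(1)] power_one)
      have p2: "(omega dL ^ e) ^ dL = 1"
        by (metis power_mult mult.commute omega_pow_dL[OF assms(1)] power_one)
      have rd: "r ^ dL = 1" unfolding r_def power_mult_distrib complex_cnj_power[symmetric] p1 p2 by simp
      have "(\<Sum>j<dL. r ^ j) = 0" using geometric_sum[OF r1, of dL] rd by simp
      then have "(\<Sum>j<dL. T j) = 0" unfolding TT r_def[symmetric] by (simp add: sum_distrib_left[symmetric])
      then show ?thesis using F2 False by simp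
    qed
  qed
qed

lemma frob_smult_right:
  assumes "A \<in> carrier_mat r c" "B \<in> carrier_mat r c"
  shows "frob A (k \<cdot>\<^sub>m B) = k * frob A B"
  using assms unfolding frob_def by (simp add: carrier_matD sum_distrib_left mult_ac)

lemma frob_Dn:
  assumes "dL > 0" "length x = length y" "set x \<subseteq> {..<dL} \<times> {..<dL}" "set y \<subseteq> {..<dL} \<times> {..<dL}"
  shows "frob (Dn dL x) (Dn dL y) = (if x = y then of_nat (dL ^ length x) else 0)"
  using assms
proof (induction x arbitrary: y)
  case Nil
  then have "y = []" by simp
  then show ?case unfolding frob_def by simp
next
  case (Cons p ps)
  then obtain q qs where y: "y = q # qs" by (cases y) auto
  obtain a b where p: "p = (a,b)" by (cases p)
  obtain c e where q: "q = (c,e)" by (cases q)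
  have IH: "frob (Dn dL ps) (Dn dL qs) = (if ps = qs then of_nat (dL ^ length ps) else 0)"
    using Cons y by simp
  have "frob (Dn dL (p # ps)) (Dn dL y) = frob (D1 dL p) (D1 dL q) * frob (Dn dL ps) (Dn dL qs)"
    unfolding y Dn.simps
    by (rule frob_kron[OF D1_carrier D1_carrier Dn_carrier]) (use Cons y in \<open>simp add: Dn_carrier\<close>)
  also have "frob (D1 dL p) (D1 dL q) = (if p = q then of_nat dL else 0)"
    unfolding p q using Cons y p q by (intro frob_D1) auto
  finally show ?case using IH y by simp
qed

lemma Dn_inj:
  assumes "dL > 0" "x \<in> Pidx dL n" "y \<in> Pidx dL n" "Dn dL x = k \<cdot>\<^sub>m Dn dL y"
  shows "x = y"
proof (rule ccontr)
  assume ne: "x \<noteq> y"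
  have lx: "length x = n" "length y = n" "set x \<subseteq> {..<dL} \<times> {..<dL}" "set y \<subseteq> {..<dL} \<times> {..<dL}"
    using assms by (auto simp: Pidx_def)
  have cx: "Dn dL x \<in> carrier_mat (dL^n) (dL^n)" "Dn dL y \<in> carrier_mat (dL^n) (dL^n)"
    using Dn_carrier[of dL x] Dn_carrier[of dL y] lx by auto
  have nz: "(of_nat (dL ^ n) :: complex) \<noteq> 0" using assms by simp
  have "0 = frob (Dn dL y) (Dn dL x)" using frob_Dn[of dL y x] lx ne assms by simp
  also have "... = k * frob (Dn dL y) (Dn dL y)" unfolding assms(4) by (rule frob_smult_right[OF cx(2) cx(2)])
  also have "... = k * of_nat (dL ^ n)" using frob_Dn[of dL y y] lx assms by simp
  finally have "k = 0" using nz assms(1) by auto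
  have "of_nat (dL ^ n) = frob (Dn dL x) (Dn dL x)" using frob_Dn[of dL x x] lx assms by simp
  also have "... = frob (Dn dL x) (k \<cdot>\<^sub>m Dn dL y)" using assms(4) by simp
  also have "... = 0" using frob_smult_right[OF cx(1) cx(2)] \<open>k = 0\<close> by simp
  finally show False using nz by simp
qed

lemma adj_dims[simp]: "dim_row (adj A) = dim_col A" "dim_col (adj A) = dim_row A"
  unfolding adj_def by (rule dim_row_mat, rule dim_col_mat)

lemma adj_index[simp]: "i < dim_col A \<Longrightarrow> j < dim_row A \<Longrightarrow> adj A $$ (i,j) = cnj (A $$ (j,i))"
  unfolding adj_def by (subst index_mat) auto

lemma adj_carrier: "A \<in> carrier_mat r c \<Longrightarrow> adj A \<in> carrier_mat c r"
  unfolding carrier_mat_def by auto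

lemma adj_adj: "adj (adj A) = A"
  by (rule eq_matI) auto

lemma adj_smult: "adj (k \<cdot>\<^sub>m A) = cnj k \<cdot>\<^sub>m adj A"
  by (rule eq_matI) auto

lemma mult_entry:
  assumes "A \<in> carrier_mat r m" "B \<in> carrier_mat m c" "i < r" "j < c"
  shows "(A * B) $$ (i,j) = (\<Sum>k<m. A $$ (i,k) * B $$ (k,j))"
  using assms by (simp add: scalar_prod_def carrier_matD atLeast0LessThan)

lemma adj_mult:
  assumes A: "A \<in> carrier_mat r m" and B: "B \<in> carrier_mat m c"
  shows "adj (A * B) = adj B * adj A"
proof (rule eq_matI)
  show "dim_row (adj (A * B)) = dim_row (adj B * adj A)" "dim_col (adj (A * B)) = dim_col (adj B * adj A)"
    using A B by (simp_all add: carrier_matD)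
  fix i j assume ij: "i < dim_row (adj B * adj A)" "j < dim_col (adj B * adj A)"
  then have i: "i < c" and j: "j < r" using A B by (simp_all add: carrier_matD)
  have "adj (A * B) $$ (i,j) = cnj ((A * B) $$ (j,i))" using A B i j by (simp add: carrier_matD)
  also have "... = cnj (\<Sum>k<m. A $$ (j,k) * B $$ (k,i))" by (simp add: mult_entry[OF A B j i])
  also have "... = (\<Sum>k<m. adj B $$ (i,k) * adj A $$ (k,j))"
    using A B i j by (simp add: cnj_sum carrier_matD mult.commute)
  also have "... = (adj B * adj A) $$ (i,j)"
    by (rule mult_entry[symmetric, OF adj_carrier[OF B] adj_carrier[OF A] i j])
  finally show "adj (A * B) $$ (i,j) = (adj B * adj A) $$ (i,j)" .
qed

lemma mtrace_smult: "A \<in> carrier_mat r r \<Longrightarrow> mtrace (k \<cdot>\<^sub>m A) = k * mtrace A"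
  unfolding mtrace_def by (simp add: sum_distrib_left carrier_matD)

lemma mtrace_mult_expand:
  assumes "A \<in> carrier_mat r c" "B \<in> carrier_mat c r"
  shows "mtrace (A * B) = (\<Sum>i<r. \<Sum>k<c. A $$ (i,k) * B $$ (k,i))"
proof -
  have d: "dim_row (A * B) = r" using assms by (simp add: carrier_matD)
  show ?thesis unfolding mtrace_def d by (rule sum.cong[OF refl], rule mult_entry[OF assms]) auto
qed

lemma mtrace_comm:
  assumes "A \<in> carrier_mat r c" "B \<in> carrier_mat c r"
  shows "mtrace (A * B) = mtrace (B * A)"
proof -
  have "mtrace (A * B) = (\<Sum>i<r. \<Sum>k<c. A $$ (i,k) * B $$ (k,i))"
    by (rule mtrace_mult_expand[OF assms])
  also have "... = (\<Sum>k<c. \<Sum>i<r. B $$ (k,i) * A $$ (i,k))"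
    by (subst sum.swap) (simp add: mult.commute)
  also have "... = mtrace (B * A)"
    by (rule mtrace_mult_expand[OF assms(2,1), symmetric])
  finally show ?thesis .
qed


lemma mult_sq_carrier: "A \<in> carrier_mat d d \<Longrightarrow> B \<in> carrier_mat d d \<Longrightarrow> A * B \<in> carrier_mat d d"
  by (rule mult_carrier_mat)

lemma key_trace:
  assumes C1: "C1 \<in> carrier_mat d d" and C2: "C2 \<in> carrier_mat d d" and U: "U \<in> carrier_mat d d"
    and u1: "adj C1 * C1 = 1\<^sub>m d" and u2: "adj C2 * C2 = 1\<^sub>m d"
    and Dx: "Dx \<in> carrier_mat d d" and D: "D \<in> carrier_mat d d"
    and E: "E \<in> carrier_mat d d" and Dp: "D' \<in> carrier_mat d d"
    and h1: "C1 * Dx * adj C1 = w \<cdot>\<^sub>m D" and h2: "C2 * E * adj C2 = v \<cdot>\<^sub>m D'"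
    and w: "cmod w = 1" and v: "cmod v = 1"
  shows "cmod (mtrace (adj D * (C1 * U * C2) * E * adj (C1 * U * C2))) =
         cmod (mtrace (adj Dx * U * D' * adj U))"
proof -
  note cs = C1 C2 U Dx D E Dp adj_carrier[OF C1] adj_carrier[OF C2] adj_carrier[OF U]
     adj_carrier[OF Dx] adj_carrier[OF D] adj_carrier[OF Dp]
  have canc: "adj C1 * (C1 * Z) = Z" if "Z \<in> carrier_mat d d" for Z
  proof -
    have "adj C1 * (C1 * Z) = (adj C1 * C1) * Z" using cs that by (simp add: assoc_mult_mat[of _ d d _ d _ d])
    then show ?thesis using u1 that by simp
  qed
  have aX: "adj (C1 * U * C2) = adj C2 * (adj U * adj C1)"
    using cs by (simp add: adj_mult[of _ d d _ d])
  have aW: "adj (C1 * Dx * adj C1) = C1 * (adj Dx * adj C1)"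
    using cs by (simp add: adj_mult[of _ d d _ d] adj_adj)
  have "cnj w \<cdot>\<^sub>m adj D = adj (C1 * Dx * adj C1)" using h1 by (simp add: adj_smult)
  have M1: "adj (C1 * Dx * adj C1) * (C1 * U * C2) * E * adj (C1 * U * C2) =
        C1 * (adj Dx * (U * ((C2 * E * adj C2) * (adj U * adj C1))))"
    unfolding aX aW using cs by (simp add: mult_sq_carrier canc assoc_mult_mat[of _ d d _ d _ d])
  also have "... = C1 * (adj Dx * (U * ((v \<cdot>\<^sub>m D') * (adj U * adj C1))))" unfolding h2 ..
  also have "... = v \<cdot>\<^sub>m (C1 * (adj Dx * U * D' * adj U * adj C1))"
    using cs by (simp add: mult_sq_carrier mult_smult_assoc_mat[of _ d d _ d] mult_smult_distrib[of _ d d _ d] assoc_mult_mat[of _ d d _ d _ d])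
  finally have M: "adj (C1 * Dx * adj C1) * (C1 * U * C2) * E * adj (C1 * U * C2) =
     v \<cdot>\<^sub>m (C1 * (adj Dx * U * D' * adj U * adj C1))" .
  have L: "adj (C1 * Dx * adj C1) * (C1 * U * C2) * E * adj (C1 * U * C2) =
      cnj w \<cdot>\<^sub>m (adj D * (C1 * U * C2) * E * adj (C1 * U * C2))"
    unfolding h1 adj_smult aX using cs by (simp add: mult_sq_carrier mult_smult_assoc_mat[of _ d d _ d] assoc_mult_mat[of _ d d _ d _ d])
  have T1: "mtrace (C1 * (adj Dx * U * D' * adj U * adj C1)) = mtrace (adj Dx * U * D' * adj U)"
  proof -
    have "mtrace (C1 * (adj Dx * U * D' * adj U * adj C1)) = mtrace ((adj Dx * U * D' * adj U * adj C1) * C1)"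
      using cs by (intro mtrace_comm[of _ d d]) (simp_all add: mult_sq_carrier)
    also have "(adj Dx * U * D' * adj U * adj C1) * C1 = adj Dx * U * D' * adj U"
      using cs by (simp add: mult_sq_carrier u1 assoc_mult_mat[of _ d d _ d _ d] right_mult_one_mat[of _ d d])
    finally show ?thesis .
  qed
  have Yc: "adj D * (C1 * U * C2) * E * adj (C1 * U * C2) \<in> carrier_mat d d"
    unfolding aX using cs by (simp add: mult_sq_carrier)
  have Zc: "C1 * (adj Dx * U * D' * adj U * adj C1) \<in> carrier_mat d d"
    using cs by (simp add: mult_sq_carrier)
  have "cnj w * mtrace (adj D * (C1 * U * C2) * E * adj (C1 * U * C2)) =
     mtrace (cnj w \<cdot>\<^sub>m (adj D * (C1 * U * C2) * E * adj (C1 * U * C2)))"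
    by (rule mtrace_smult[OF Yc, symmetric])
  also have "... = mtrace (v \<cdot>\<^sub>m (C1 * (adj Dx * U * D' * adj U * adj C1)))"
    using L M by simp
  also have "... = v * mtrace (C1 * (adj Dx * U * D' * adj U * adj C1))"
    by (rule mtrace_smult[OF Zc])
  also have "... = v * mtrace (adj Dx * U * D' * adj U)" using T1 by simp
  finally have "cnj w * mtrace (adj D * (C1 * U * C2) * E * adj (C1 * U * C2)) = v * mtrace (adj Dx * U * D' * adj U)" .
  then have "cmod (cnj w) * cmod (mtrace (adj D * (C1 * U * C2) * E * adj (C1 * U * C2))) = cmod v * cmod (mtrace (adj Dx * U * D' * adj U))"
    by (simp only: norm_mult[symmetric])
  then show ?thesis using w v by simp
qed

lemma smult_smult_mat: "a \<cdot>\<^sub>m (b \<cdot>\<^sub>m A) = (a * b :: complex) \<cdot>\<^sub>m A"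
  by (rule eq_matI) auto

lemma Pidx_Dn_carrier: "a \<in> Pidx dL n \<Longrightarrow> Dn dL a \<in> carrier_mat (dL ^ n) (dL ^ n)"
  using Dn_carrier[of dL a] by (simp add: Pidx_def)

lemma Pidx_finite: "finite (Pidx dL n)"
proof -
  have "Pidx dL n = {xs. set xs \<subseteq> {..<dL} \<times> {..<dL} \<and> length xs = n}" by (auto simp: Pidx_def)
  then show ?thesis by (simp add: finite_lists_length_eq)
qed

lemma unitaryD: assumes "C \<in> unitaries d"
  shows "C \<in> carrier_mat d d" "C * adj C = 1\<^sub>m d" "adj C * C = 1\<^sub>m d"
  using assms by (auto simp: unitaries_def)

lemma conj_back:
  assumes C: "C \<in> carrier_mat d d" and u: "adj C * C = 1\<^sub>m d" and A: "A \<in> carrier_mat d d"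
  shows "adj C * (C * A * adj C) * C = A"
proof -
  have aC: "adj C \<in> carrier_mat d d" using adj_carrier[OF C] .
  have "adj C * (C * A * adj C) * C = (adj C * C) * A * (adj C * C)"
    using C A aC by (simp add: assoc_mult_mat[of _ d d _ d _ d])
  also have "... = A" using u A by simp
  finally show ?thesis .
qed

lemma clifford_map:
  assumes C: "C \<in> Clifford dL n" and dL: "dL > 0"
  obtains f s where "bij_betw f (Pidx dL n) (Pidx dL n)"
    "\<And>a. a \<in> Pidx dL n \<Longrightarrow> C * Dn dL a * adj C = omega dL ^ s a \<cdot>\<^sub>m Dn dL (f a)"
proof -
  let ?P = "Pidx dL n"
  let ?d = "dL ^ n"
  have ex: "\<forall>a\<in>?P. \<exists>p. snd p \<in> ?P \<and> C * Dn dL a * adj C = omega dL ^ (fst p) \<cdot>\<^sub>m Dn dL (snd p)"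
  proof
    fix a assume "a \<in> ?P"
    then obtain s a' where "a' \<in> ?P" "C * Dn dL a * adj C = omega dL ^ s \<cdot>\<^sub>m Dn dL a'"
      using C unfolding Clifford_def by blast
    then show "\<exists>p. snd p \<in> ?P \<and> C * Dn dL a * adj C = omega dL ^ (fst p) \<cdot>\<^sub>m Dn dL (snd p)"
      by (intro exI[of _ "(s,a')"]) simp
  qed
  then obtain g where g: "\<forall>a\<in>?P. snd (g a) \<in> ?P \<and> C * Dn dL a * adj C = omega dL ^ (fst (g a)) \<cdot>\<^sub>m Dn dL (snd (g a))"
    by (rule bchoice[elim_format]) blast
  define f where "f = (\<lambda>a. snd (g a))"
  define s where "s = (\<lambda>a. fst (g a))"
  have fs: "\<And>a. a \<in> ?P \<Longrightarrow> f a \<in> ?P \<and> C * Dn dL a * adj C = omega dL ^ s a \<cdot>\<^sub>m Dn dL (f a)"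
    using g unfolding f_def s_def by blast
  have Cc: "C \<in> carrier_mat ?d ?d" and u: "adj C * C = 1\<^sub>m ?d"
    using C unitaryD[of C ?d] unfolding Clifford_def by auto
  have back_eq: "Dn dL a = omega dL ^ s a \<cdot>\<^sub>m (adj C * Dn dL (f a) * C)" if a: "a \<in> ?P" for a
  proof -
    have fa: "Dn dL (f a) \<in> carrier_mat ?d ?d" using fs[OF a] Pidx_Dn_carrier by blast
    have "Dn dL a = adj C * (C * Dn dL a * adj C) * C"
      using conj_back[OF Cc u Pidx_Dn_carrier[OF a]] by simp
    also have "... = adj C * (omega dL ^ s a \<cdot>\<^sub>m Dn dL (f a)) * C" using fs[OF a] by simp
    also have "... = omega dL ^ s a \<cdot>\<^sub>m (adj C * Dn dL (f a) * C)"
      using fa Cc adj_carrier[OF Cc]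
      by (simp add: mult_smult_distrib[of _ ?d ?d _ ?d] mult_smult_assoc_mat[of _ ?d ?d _ ?d] mult_sq_carrier)
    finally show ?thesis .
  qed
  have inj: "inj_on f ?P"
  proof (rule inj_onI)
    fix x y assume x: "x \<in> ?P" and y: "y \<in> ?P" and fxy: "f x = f y"
    let ?M = "adj C * Dn dL (f x) * C"
    have "Dn dL x = omega dL ^ s x \<cdot>\<^sub>m ?M" using back_eq[OF x] .
    also have "... = (omega dL ^ s x / omega dL ^ s y * omega dL ^ s y) \<cdot>\<^sub>m ?M"
      using omega_nz by simp
    also have "... = (omega dL ^ s x / omega dL ^ s y) \<cdot>\<^sub>m (omega dL ^ s y \<cdot>\<^sub>m ?M)"
      by (simp add: smult_smult_mat)
    also have "omega dL ^ s y \<cdot>\<^sub>m ?M = Dn dL y" using back_eq[OF y] fxy by simp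
    finally show "x = y" using Dn_inj[OF dL x y] by blast
  qed
  have "f ` ?P = ?P" using endo_inj_surj[OF Pidx_finite _ inj] fs by blast
  then have "bij_betw f ?P ?P" using inj by (simp add: bij_betw_def)
  then show ?thesis using that fs by blast
qed

lemma omega_norm: "cmod (omega dL ^ k) = 1"
  unfolding omega_def norm_power norm_exp_eq_Re by simp

theorem theorem2:
  fixes dL n :: nat and \<alpha> :: real and U C1 C2 :: "complex mat"
  assumes "dL \<ge> 2" and "n \<ge> 1"
    and "\<alpha> > 0" and "\<alpha> \<noteq> 1"
    and "U \<in> unitaries (dL ^ n)"
    and "C1 \<in> Clifford dL n" and "C2 \<in> Clifford dL n"
  shows "Halpha dL n \<alpha> (C1 * U * C2) = Halpha dL n \<alpha> U"
proof -
  let ?P = "Pidx dL n"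
  let ?d = "dL ^ n"
  have dL: "dL > 0" using assms(1) by simp
  have Uc: "U \<in> carrier_mat ?d ?d" using unitaryD(1)[OF assms(5)] .
  have C1c: "C1 \<in> carrier_mat ?d ?d" and u1: "adj C1 * C1 = 1\<^sub>m ?d"
    using assms(6) unitaryD[of C1 ?d] unfolding Clifford_def by auto
  have C2c: "C2 \<in> carrier_mat ?d ?d" and u2: "adj C2 * C2 = 1\<^sub>m ?d"
    using assms(7) unitaryD[of C2 ?d] unfolding Clifford_def by auto
  obtain f1 s1 where f1: "bij_betw f1 ?P ?P"
    and h1: "\<And>a. a \<in> ?P \<Longrightarrow> C1 * Dn dL a * adj C1 = omega dL ^ s1 a \<cdot>\<^sub>m Dn dL (f1 a)"
    using clifford_map[OF assms(6) dL] by blast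
  obtain f2 s2 where f2: "bij_betw f2 ?P ?P"
    and h2: "\<And>a. a \<in> ?P \<Longrightarrow> C2 * Dn dL a * adj C2 = omega dL ^ s2 a \<cdot>\<^sub>m Dn dL (f2 a)"
    using clifford_map[OF assms(7) dL] by blast
  have key: "frakD dL n (f1 x) b (C1 * U * C2) = frakD dL n x (f2 b) U" if x: "x \<in> ?P" and b: "b \<in> ?P" for x b
  proof -
    have fx: "f1 x \<in> ?P" using f1 x by (auto simp: bij_betw_def)
    have fb: "f2 b \<in> ?P" using f2 b by (auto simp: bij_betw_def)
    have "cmod (mtrace (adj (Dn dL (f1 x)) * (C1 * U * C2) * Dn dL b * adj (C1 * U * C2))) =
          cmod (mtrace (adj (Dn dL x) * U * Dn dL (f2 b) * adj U))"
      by (rule key_trace[OF C1c C2c Uc u1 u2 Pidx_Dn_carrier[OF x] Pidx_Dn_carrier[OF fx]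
            Pidx_Dn_carrier[OF b] Pidx_Dn_carrier[OF fb] h1[OF x] h2[OF b] omega_norm omega_norm])
    then show ?thesis unfolding frakD_def frakC_def by (simp add: norm_divide)
  qed
  let ?S = "\<lambda>V. (\<Sum>a \<in> ?P. \<Sum>b \<in> ?P. (frakD dL n a b V) powr \<alpha>)"
  have "?S (C1 * U * C2) = (\<Sum>x \<in> ?P. \<Sum>b \<in> ?P. (frakD dL n (f1 x) b (C1 * U * C2)) powr \<alpha>)"
    using sum.reindex_bij_betw[OF f1, of "\<lambda>a. \<Sum>b \<in> ?P. (frakD dL n a b (C1 * U * C2)) powr \<alpha>"] by simp
  also have "... = (\<Sum>x \<in> ?P. \<Sum>b \<in> ?P. (frakD dL n x (f2 b) U) powr \<alpha>)"
    by (intro sum.cong refl) (simp add: key)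
  also have "... = ?S U"
  proof (rule sum.cong[OF refl])
    fix x assume "x \<in> ?P"
    show "(\<Sum>b \<in> ?P. (frakD dL n x (f2 b) U) powr \<alpha>) = (\<Sum>b \<in> ?P. (frakD dL n x b U) powr \<alpha>)"
      using sum.reindex_bij_betw[OF f2, of "\<lambda>b. (frakD dL n x b U) powr \<alpha>"] by simp
  qed
  finally have "?S (C1 * U * C2) = ?S U" .
  then show ?thesis unfolding Halpha_def by simp
qed

end
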